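(* Let $\Phi$ be a channel matrix whose rows $P^1,P^2,P^3\in\Delta^n$ are in general position, let $Q^0$ be the equidistant point from $P^1,P^2,P^3$ and $\boldsymbol\lambda^0$ its barycentric coordinate. Suppose $\lambda^0_1<0$, $\lambda^0_2\ge0$, $\lambda^0_3\ge0$, and let $Q^1=\pi(Q^0|L(P^2,P^3))$. Then the output distribution achieving the channel capacity is $Q^\ast=Q^1$ and the channel capacity is $C=D(P^2\|Q^1)$.
   Context: $\Delta^n=\{Q:Q_j>0,\sum_jQ_j=1\}$, $\bar\Delta^m=\{\boldsymbol\lambda:\lambda_i\ge0,\sum_i\lambda_i=1\}$; $D(Q\|Q')=\sum_jQ_j\log(Q_j/Q'_j)$. Rows are in general position if $P^2-P^1,\dots,P^m-P^1$ are linearly independent. $L(S^1,\dots,S^r)=\{\sum_i\lambda_iS^i:\sum_i\lambda_i=1\}\cap\Delta^n$; for such an affine subspace $L$, $\pi(Q'|L)$ is the unique $Q\in L$ minimizing $D(Q\|Q')$. The barycentric coordinate of $Q\in L(P^1,\dots,P^m)$ is the unique $\boldsymbol\lambda$ with $\sum_i\lambda_i=1$, $Q=\sum_i\lambda_iP^i$. The equidistant point is the unique $Q^0\in L(P^1,\dots,P^m)$ with all $D(P^i\|Q^0)$ equal. Mutual information $I(\boldsymbol\lambda,\Phi)=\sum_{i,j}\lambda_iP^i_j\log(P^i_j/Q_j)$ with $Q=\boldsymbol\lambda\Phi$; capacity $C=\max_{\boldsymbol\lambda\in\bar\Delta^m}I(\boldsymbol\lambda,\Phi)$; the capacity-achieving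 output distribution is $Q^\ast=\boldsymbol\lambda^\ast\Phi$ for a maximizer $\boldsymbol\lambda^\ast$ (unique). *)

theory Defs
  imports "HOL-Analysis.Analysis"
begin

text \<open>Output alphabet: a finite type 'b (n = CARD('b)).
  A channel matrix with m rows is P :: nat \<Rightarrow> 'b \<Rightarrow> real, rows P 1, ..., P m.\<close>

definition open_simplex :: "('b::finite \<Rightarrow> real) set" where
  "open_simplex = {Q. (\<forall>j. Q j > 0) \<and> (\<Sum>j\<in>UNIV. Q j) = 1}"

definition closed_simplex :: "nat \<Rightarrow> (nat \<Rightarrow> real) set" where
  "closed_simplex m = {lam. (\<forall>i\<in>{1..m}. lam i \<ge> 0) \<and> (\<Sum>i=1..m. lam i) = 1
                          \<and> (\<forall>i. i \<notin> {1..m} \<longrightarrow> lam i = 0)}"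

definition KL :: "('b::finite \<Rightarrow> real) \<Rightarrow> ('b \<Rightarrow> real) \<Rightarrow> real" where
  "KL Q Q' = (\<Sum>j\<in>UNIV. Q j * ln (Q j / Q' j))"

definition general_position :: "nat \<Rightarrow> (nat \<Rightarrow> 'b::finite \<Rightarrow> real) \<Rightarrow> bool" where
  "general_position m P \<longleftrightarrow>
     (\<forall>c :: nat \<Rightarrow> real. (\<forall>j. (\<Sum>i=2..m. c i * (P i j - P 1 j)) = 0) \<longrightarrow> (\<forall>i\<in>{2..m}. c i = 0))"

definition affL :: "('b::finite \<Rightarrow> real) list \<Rightarrow> ('b \<Rightarrow> real) set" where
  "affL Ss = {Q \<in> open_simplex. \<exists>mu :: nat \<Rightarrow> real. (\<Sum>i<length Ss. mu i) = 1 \<and>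
                 (\<forall>j. Q j = (\<Sum>i<length Ss. mu i * (Ss ! i) j))}"

definition rows :: "nat \<Rightarrow> (nat \<Rightarrow> 'b \<Rightarrow> real) \<Rightarrow> ('b \<Rightarrow> real) list" where
  "rows m P = map P [1..<Suc m]"

definition Iproj :: "('b::finite \<Rightarrow> real) \<Rightarrow> ('b \<Rightarrow> real) set \<Rightarrow> ('b \<Rightarrow> real)" where
  "Iproj Q' L = (THE Q. Q \<in> L \<and> (\<forall>R\<in>L. KL Q Q' \<le> KL R Q'))"

definition barycentric :: "nat \<Rightarrow> (nat \<Rightarrow> 'b::finite \<Rightarrow> real) \<Rightarrow> ('b \<Rightarrow> real) \<Rightarrow> (nat \<Rightarrow> real)" where
  "barycentric m P Q = (THE lam. (\<Sum>i=1..m. lam i) = 1 \<and> (\<forall>i. i \<notin> {1..m} \<longrightarrow> lam i = 0)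
                                 \<and> (\<forall>j. Q j = (\<Sum>i=1..m. lam i * P i j)))"

definition equidistant :: "nat \<Rightarrow> (nat \<Rightarrow> 'b::finite \<Rightarrow> real) \<Rightarrow> ('b \<Rightarrow> real)" where
  "equidistant m P = (THE Q. Q \<in> affL (rows m P) \<and>
                         (\<forall>i\<in>{1..m}. \<forall>k\<in>{1..m}. KL (P i) Q = KL (P k) Q))"

definition output_dist :: "nat \<Rightarrow> (nat \<Rightarrow> 'b::finite \<Rightarrow> real) \<Rightarrow> (nat \<Rightarrow> real) \<Rightarrow> ('b \<Rightarrow> real)" where
  "output_dist m P lam = (\<lambda>j. \<Sum>i=1..m. lam i * P i j)"

definition mutual_info :: "nat \<Rightarrow> (nat \<Rightarrow> 'b::finite \<Rightarrow> real) \<Rightarrow> (nat \<Rightarrow> real) \<Rightarrow> real" where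
  "mutual_info m P lam =
     (\<Sum>i=1..m. \<Sum>j\<in>UNIV. lam i * P i j * ln (P i j / output_dist m P lam j))"

definition capacity :: "nat \<Rightarrow> (nat \<Rightarrow> 'b::finite \<Rightarrow> real) \<Rightarrow> real" where
  "capacity m P = (SUP lam\<in>closed_simplex m. mutual_info m P lam)"

definition capacity_output :: "nat \<Rightarrow> (nat \<Rightarrow> 'b::finite \<Rightarrow> real) \<Rightarrow> ('b \<Rightarrow> real)" where
  "capacity_output m P = (THE Q. \<exists>lam\<in>closed_simplex m.
       mutual_info m P lam = capacity m P \<and> Q = output_dist m P lam)"

end

theory Submission
  imports Defs "HOL-Real_Asymp.Real_Asymp"
begin


definition cross :: "('b::finite \<Rightarrow> real) \<Rightarrow> ('b \<Rightarrow> real) \<Rightarrow> real" where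
  "cross Q R = (\<Sum>j\<in>UNIV. Q j * ln (R j))"

definition pos :: "('b::finite \<Rightarrow> real) \<Rightarrow> bool" where
  "pos Q \<longleftrightarrow> (\<forall>j. Q j > 0)"

lemma KL_cross: "pos Q \<Longrightarrow> pos R \<Longrightarrow> KL Q R = cross Q Q - cross Q R"
proof -
  assume a: "pos Q" "pos R"
  have "Q j * ln (Q j / R j) = Q j * ln (Q j) - Q j * ln (R j)" for j
  proof -
    have "Q j > 0" "R j > 0" using a unfolding pos_def by auto
    then show ?thesis by (simp add: ln_div right_diff_distrib)
  qed
  then show ?thesis unfolding KL_def cross_def by (simp add: sum_subtractf[symmetric])
qed

lemma cross_lin2: "cross (\<lambda>j. a * A j + b * B j) R = a * cross A R + b * cross B R"
  unfolding cross_def by (simp add: sum.distrib sum_distrib_left algebra_simps)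

lemma cross_lin3: "cross (\<lambda>j. a * A j + b * B j + c * C j) R = a * cross A R + b * cross B R + c * cross C R"
  unfolding cross_def by (simp add: sum.distrib sum_distrib_left algebra_simps)

lemma gibbs_le:
  assumes "pos Q" "pos R" "sum Q UNIV = 1" "sum R UNIV = 1"
  shows "cross Q R \<le> cross Q Q"
proof -
  have "cross Q R - cross Q Q = (\<Sum>j\<in>UNIV. Q j * (ln (R j) - ln (Q j)))"
    unfolding cross_def by (simp add: sum_subtractf[symmetric] right_diff_distrib)
  also have "\<dots> \<le> (\<Sum>j\<in>UNIV. R j - Q j)"
  proof (rule sum_mono)
    fix j
    have q: "Q j > 0" "R j > 0" using assms unfolding pos_def by auto
    have "ln (R j) - ln (Q j) \<le> (R j - Q j) / Q j" using ln_diff_le q by blast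
    then show "Q j * (ln (R j) - ln (Q j)) \<le> R j - Q j" using q
      by (simp add: field_simps)
  qed
  also have "\<dots> = 0" using assms by (simp add: sum_subtractf)
  finally show ?thesis by simp
qed

lemma gibbs_eq:
  assumes "pos Q" "pos R" "sum Q UNIV = 1" "sum R UNIV = 1" "cross Q R \<ge> cross Q Q"
  shows "Q = R"
proof (rule ccontr)
  assume "Q \<noteq> R"
  then obtain j0 where j0: "Q j0 \<noteq> R j0" by auto
  have "cross Q R - cross Q Q = (\<Sum>j\<in>UNIV. Q j * (ln (R j) - ln (Q j)))"
    unfolding cross_def by (simp add: sum_subtractf[symmetric] right_diff_distrib)
  also have "\<dots> < (\<Sum>j\<in>UNIV. R j - Q j)"
  proof (rule sum_strict_mono_ex1)
    show "\<forall>j\<in>UNIV. Q j * (ln (R j) - ln (Q j)) \<le> R j - Q j"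
    proof
      fix j
      have q: "Q j > 0" "R j > 0" using assms unfolding pos_def by auto
      have "ln (R j) - ln (Q j) \<le> (R j - Q j) / Q j" using ln_diff_le q by blast
      then show "Q j * (ln (R j) - ln (Q j)) \<le> R j - Q j" using q
        by (simp add: field_simps)
    qed
    have q: "Q j0 > 0" "R j0 > 0" using assms unfolding pos_def by auto
    have "ln (R j0) - ln (Q j0) < (R j0 - Q j0) / Q j0" using ln_diff_less q j0 by metis
    then show "\<exists>j\<in>UNIV. Q j * (ln (R j) - ln (Q j)) < R j - Q j" using q
      by (intro bexI[of _ j0]) (simp_all add: field_simps)
  qed simp
  also have "\<dots> = 0" using assms by (simp add: sum_subtractf)
  finally show False using assms(5) by simp
qed

lemma sum13: "(\<Sum>i=1..3. f i) = f (1::nat) + f 2 + f 3"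
proof -
  have "{1..3::nat} = {1,2,3}" by auto
  then show ?thesis by (simp add: add.assoc)
qed

lemma sum23: "(\<Sum>i=2..3. f i) = f (2::nat) + f 3"
proof -
  have "{2..3::nat} = {2,3}" by auto
  then show ?thesis by simp
qed

lemma rows3: "rows 3 P = [P 1, P 2, P 3]"
  by (simp add: rows_def numeral_3_eq_3 numeral_2_eq_2 upt_rec)

lemma lessThan3: "(\<Sum>i<3. f i) = f (0::nat) + f 1 + f 2"
proof -
  have "{..<3::nat} = {0,1,2}" by auto
  then show ?thesis by (simp add: add.assoc)
qed

lemma lessThan2: "(\<Sum>i<2. f i) = f (0::nat) + f 1"
  by (simp add: numeral_2_eq_2)

lemma xlnx_right: "((\<lambda>x::real. x * ln x) \<longlongrightarrow> 0) (at_right 0)"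
  by real_asymp

lemma cont_xlnx: "continuous_on {0..} (\<lambda>x::real. x * ln x)"
proof -
  have "continuous (at x within {0..}) (\<lambda>x::real. x * ln x)" if "x \<ge> 0" for x
  proof (cases "x = 0")
    case True
    then show ?thesis using True xlnx_right by (simp add: continuous_within at_within_Ici_at_right)
  next
    case False
    then have "x > 0" using that by auto
    then have "continuous (at x) (\<lambda>x::real. x * ln x)"
      by (intro continuous_intros) auto
    then show ?thesis using continuous_at_imp_continuous_at_within by blast
  qed
  then show ?thesis by (simp add: continuous_on_eq_continuous_within)
qed

lemma xlnx_convex:
  fixes u p e :: real
  assumes "u \<ge> 0" "p > 0" "0 \<le> e" "e \<le> 1"
  shows "((1-e)*u + e*p) * ln ((1-e)*u + e*p) \<le> (1-e) * (u * ln u) + e * (p * ln p)"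
proof (cases "e = 0")
  case True then show ?thesis by simp
next
  case False
  then have e: "e > 0" using assms by auto
  define w where "w = (1-e)*u + e*p"
  have w: "w > 0" unfolding w_def using assms e by (smt (verit) mult_nonneg_nonneg mult_pos_pos)
  have A: "(1-e) * (u * ln u) \<ge> (1-e) * (u * ln w) + (1-e)*(u - w)"
  proof (cases "u = 0")
    case True then show ?thesis using w assms by simp
  next
    case False
    then have u: "u > 0" using assms by auto
    have "ln w - ln u \<le> (w - u) / u" using ln_diff_le u w by blast
    then have "u * ln w - u * ln u \<le> w - u" using u by (simp add: field_simps)
    then show ?thesis using assms by (smt (verit) mult_left_mono distrib_left right_diff_distrib)
  qed
  have B: "e * (p * ln p) \<ge> e * (p * ln w) + e*(p - w)"
  proof -
    have "ln w - ln p \<le> (w - p) / p" using ln_diff_le assms w by blast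
    then have "p * ln w - p * ln p \<le> w - p" using assms by (simp add: field_simps)
    then show ?thesis using assms by (smt (verit) mult_left_mono distrib_left right_diff_distrib)
  qed
  have "w * ln w = (1-e) * (u * ln w) + e * (p * ln w)" unfolding w_def by (simp add: algebra_simps)
  moreover have "(1-e)*(u - w) + e*(p - w) = 0" unfolding w_def by (simp add: algebra_simps)
  ultimately show ?thesis using A B unfolding w_def by linarith
qed


lemma pyth:
  assumes pA: "pos A" and pB: "pos B" and p0: "pos Q0" and ps: "pos Qs" and pR: "pos R"
    and Qs: "Qs = (\<lambda>j. (1-t) * A j + t * B j)"
    and R: "R = (\<lambda>j. (1-s) * A j + s * B j)"
    and e0: "KL A Q0 = KL B Q0" and es: "KL A Qs = KL B Qs"
  shows "KL R Q0 = KL Qs Q0 + KL R Qs"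
proof -
  have e0': "cross A A - cross A Q0 = cross B B - cross B Q0" using e0 by (simp add: KL_cross pA pB p0)
  have es': "cross A A - cross A Qs = cross B B - cross B Qs" using es by (simp add: KL_cross pA pB ps)
  have 1: "cross R Q0 = (1-s) * cross A Q0 + s * cross B Q0" unfolding R by (rule cross_lin2)
  have 2: "cross R Qs = (1-s) * cross A Qs + s * cross B Qs" unfolding R by (rule cross_lin2)
  have 3: "cross Qs Q0 = (1-t) * cross A Q0 + t * cross B Q0" unfolding Qs by (rule cross_lin2)
  have 4: "cross Qs Qs = (1-t) * cross A Qs + t * cross B Qs" by (subst (1) Qs) (rule cross_lin2)
  have "cross R Qs - cross R Q0 = cross Qs Qs - cross Qs Q0"
  proof -
    have k: "cross B Qs = cross A Qs + cross B Q0 - cross A Q0" using e0' es' by linarith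
    show ?thesis unfolding 1 2 3 4 k by (simp add: algebra_simps)
  qed
  then show ?thesis by (simp add: KL_cross pR p0 ps)
qed


lemma open_simplex_pos: "Q \<in> open_simplex \<Longrightarrow> pos Q \<and> sum Q UNIV = 1"
  unfolding open_simplex_def pos_def by auto

lemma output3: "output_dist 3 P lam = (\<lambda>j. lam 1 * P 1 j + lam 2 * P 2 j + lam 3 * P 3 j)"
  unfolding output_dist_def sum13 by (rule refl)

lemma mi_formula:
  fixes P :: "nat \<Rightarrow> 'b::finite \<Rightarrow> real"
  assumes pP0: "\<forall>i\<in>{1..3}. P i \<in> open_simplex"
    and lam: "lam \<in> closed_simplex 3" and ps: "pos Qs"
  shows "pos (output_dist 3 P lam) \<and> sum (output_dist 3 P lam) UNIV = 1 \<and>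
    mutual_info 3 P lam = lam 1 * KL (P 1) Qs + lam 2 * KL (P 2) Qs + lam 3 * KL (P 3) Qs
       - KL (output_dist 3 P lam) Qs"
proof -
  have pP: "P i \<in> open_simplex" if "i \<in> {1..3}" for i using pP0 that by blast
  define Ql where "Ql = output_dist 3 P lam"
  have Ql: "Ql = (\<lambda>j. lam 1 * P 1 j + lam 2 * P 2 j + lam 3 * P 3 j)" unfolding Ql_def output3 ..
  have l: "lam 1 \<ge> 0" "lam 2 \<ge> 0" "lam 3 \<ge> 0" "lam 1 + lam 2 + lam 3 = 1"
    using lam unfolding closed_simplex_def sum13 by auto
  have p1: "pos (P 1)" "sum (P 1) UNIV = 1" using pP[of 1] open_simplex_pos by auto
  have p2: "pos (P 2)" "sum (P 2) UNIV = 1" using pP[of 2] open_simplex_pos by auto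
  have p3: "pos (P 3)" "sum (P 3) UNIV = 1" using pP[of 3] open_simplex_pos by auto
  have pQ: "pos Ql" unfolding pos_def
  proof
    fix j
    define m where "m = min (P 1 j) (min (P 2 j) (P 3 j))"
    have m: "m > 0" "m \<le> P 1 j" "m \<le> P 2 j" "m \<le> P 3 j"
      using p1 p2 p3 unfolding m_def pos_def by auto
    have "lam 1 * m \<le> lam 1 * P 1 j" "lam 2 * m \<le> lam 2 * P 2 j" "lam 3 * m \<le> lam 3 * P 3 j"
      using m l by (auto intro: mult_left_mono)
    moreover have "lam 1 * m + lam 2 * m + lam 3 * m = (lam 1 + lam 2 + lam 3) * m" by (simp add: algebra_simps)
    then have "lam 1 * m + lam 2 * m + lam 3 * m = m" using l(4) by simp
    ultimately show "Ql j > 0" unfolding Ql using m(1) by linarith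
  qed
  have sQ: "sum Ql UNIV = 1" unfolding Ql
    using p1 p2 p3 l(4) by (simp add: sum.distrib sum_distrib_left[symmetric])
  have mi: "mutual_info 3 P lam = lam 1 * KL (P 1) Ql + lam 2 * KL (P 2) Ql + lam 3 * KL (P 3) Ql"
    unfolding mutual_info_def KL_def Ql_def[symmetric] sum13
    by (simp add: sum_distrib_left mult.assoc)
  have cQ: "cross Ql Ql = lam 1 * cross (P 1) Ql + lam 2 * cross (P 2) Ql + lam 3 * cross (P 3) Ql"
    by (subst (1) Ql) (rule cross_lin3)
  have cQs: "cross Ql Qs = lam 1 * cross (P 1) Qs + lam 2 * cross (P 2) Qs + lam 3 * cross (P 3) Qs"
    unfolding Ql by (rule cross_lin3)
  have "mutual_info 3 P lam = lam 1 * KL (P 1) Qs + lam 2 * KL (P 2) Qs + lam 3 * KL (P 3) Qs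
       - KL Ql Qs"
    unfolding mi using p1 p2 p3 pQ ps cQ cQs by (simp add: KL_cross algebra_simps)
  then show ?thesis using pQ sQ unfolding Ql_def by simp
qed


lemma final_part:
  fixes P :: "nat \<Rightarrow> 'b::finite \<Rightarrow> real"
  assumes pP0: "\<forall>i\<in>{1..3}. P i \<in> open_simplex"
    and Q0s: "Q0 \<in> open_simplex"
    and Q0: "Q0 = (\<lambda>j. l1 * P 1 j + l2 * P 2 j + l3 * P 3 j)" and lsum: "l1 + l2 + l3 = 1"
    and l1: "l1 < 0"
    and e01: "KL (P 1) Q0 = KL (P 2) Q0" and e02: "KL (P 2) Q0 = KL (P 3) Q0"
    and t: "0 \<le> t" "t \<le> 1" and Qs: "Qs = (\<lambda>j. (1-t) * P 2 j + t * P 3 j)"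
    and es: "KL (P 2) Qs = KL (P 3) Qs"
  shows "Iproj Q0 (affL [P 2, P 3]) = Qs \<and> capacity_output 3 P = Qs \<and> capacity 3 P = KL (P 2) Qs"
proof -
  have pP: "P i \<in> open_simplex" if "i \<in> {1..3}" for i using pP0 that by blast
  have p1: "pos (P 1)" "sum (P 1) UNIV = 1" using pP[of 1] open_simplex_pos by auto
  have p2: "pos (P 2)" "sum (P 2) UNIV = 1" using pP[of 2] open_simplex_pos by auto
  have p3: "pos (P 3)" "sum (P 3) UNIV = 1" using pP[of 3] open_simplex_pos by auto
  have p0: "pos Q0" "sum Q0 UNIV = 1" using Q0s open_simplex_pos by auto
  have ps: "pos Qs" unfolding pos_def
  proof
    fix j
    have "P 2 j > 0" "P 3 j > 0" using p2 p3 unfolding pos_def by auto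
    then have "(1-t) * P 2 j \<ge> 0" "t * P 3 j \<ge> 0" using t by auto
    moreover have "(1-t) * P 2 j > 0 \<or> t * P 3 j > 0" using t \<open>P 2 j > 0\<close> \<open>P 3 j > 0\<close>
      by (cases "t = 1") auto
    ultimately show "Qs j > 0" unfolding Qs by auto
  qed
  have ss: "sum Qs UNIV = 1" unfolding Qs
    using p2 p3 by (simp add: sum.distrib sum_distrib_left[symmetric])
  have Qsin: "Qs \<in> open_simplex" using ps ss unfolding open_simplex_def pos_def by auto
  define c where "c = KL (P 2) Qs"
  define d0 where "d0 = KL (P 2) Q0"
  have L: "R \<in> affL [P 2, P 3] \<longleftrightarrow> R \<in> open_simplex \<and> (\<exists>s. R = (\<lambda>j. (1-s) * P 2 j + s * P 3 j))" for R
  proof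
    assume "R \<in> affL [P 2, P 3]"
    then have "R \<in> open_simplex \<and> (\<exists>mu. mu 0 + mu (Suc 0) = 1 \<and> (\<forall>j. R j = mu 0 * P 2 j + mu (Suc 0) * P 3 j))"
      unfolding affL_def lessThan2 by simp
    then obtain mu where R: "R \<in> open_simplex" "mu 0 + mu (Suc 0) = 1" "\<forall>j. R j = mu 0 * P 2 j + mu (Suc 0) * P 3 j"
      by blast
    have m0: "mu 0 = 1 - mu (Suc 0)" using R(2) by simp
    have "R = (\<lambda>j. (1 - mu (Suc 0)) * P 2 j + mu (Suc 0) * P 3 j)"
      using R(3) unfolding m0 by (simp add: fun_eq_iff)
    then show "R \<in> open_simplex \<and> (\<exists>s. R = (\<lambda>j. (1-s) * P 2 j + s * P 3 j))" using R(1) by blast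
  next
    assume "R \<in> open_simplex \<and> (\<exists>s. R = (\<lambda>j. (1-s) * P 2 j + s * P 3 j))"
    then obtain s where R: "R \<in> open_simplex" "R = (\<lambda>j. (1-s) * P 2 j + s * P 3 j)" by blast
    show "R \<in> affL [P 2, P 3]" unfolding affL_def lessThan2
      using R by (auto intro!: exI[of _ "\<lambda>i. if i = 0 then 1 - s else s"])
  qed
  have py: "KL R Q0 = KL Qs Q0 + KL R Qs" if "R \<in> affL [P 2, P 3]" for R
  proof -
    have "R \<in> open_simplex \<and> (\<exists>s. R = (\<lambda>j. (1-s) * P 2 j + s * P 3 j))" using L[of R] that by (rule iffD1)
    then obtain s where R: "R \<in> open_simplex" "R = (\<lambda>j. (1-s) * P 2 j + s * P 3 j)" by blast
    have pR: "pos R" using open_simplex_pos[OF R(1)] by blast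
    show ?thesis by (rule pyth[OF p2(1) p3(1) p0(1) ps pR Qs R(2) e02 es])
  qed
  have KLnn: "KL R Qs \<ge> 0" if "R \<in> open_simplex" for R
  proof -
    have "pos R" "sum R UNIV = 1" using open_simplex_pos[OF that] by auto
    then show ?thesis using gibbs_le[of R Qs] ps ss KL_cross[of R Qs] by linarith
  qed
  have KLz: "R = Qs" if "R \<in> open_simplex" "KL R Qs \<le> 0" for R
  proof -
    have "pos R" "sum R UNIV = 1" using open_simplex_pos[OF that(1)] by auto
    moreover have "cross R Qs \<ge> cross R R" using \<open>pos R\<close> ps that(2) KL_cross[of R Qs] by linarith
    ultimately show ?thesis using gibbs_eq[of R Qs] ps ss by blast
  qed
  have Qs_in: "Qs \<in> affL [P 2, P 3]" unfolding L[of Qs] using Qsin Qs by (intro conjI exI[of _ t])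
  have iproj: "Iproj Q0 (affL [P 2, P 3]) = Qs"
    unfolding Iproj_def
  proof (rule the_equality)
    show "Qs \<in> affL [P 2, P 3] \<and> (\<forall>R\<in>affL [P 2, P 3]. KL Qs Q0 \<le> KL R Q0)"
    proof (intro conjI Qs_in ballI)
      fix R assume R: "R \<in> affL [P 2, P 3]"
      have "R \<in> open_simplex" using iffD1[OF L[of R] R] by (rule conjunct1)
      then show "KL Qs Q0 \<le> KL R Q0" using py[OF R] KLnn[of R] by linarith
    qed
  next
    fix Q assume a: "Q \<in> affL [P 2, P 3] \<and> (\<forall>R\<in>affL [P 2, P 3]. KL Q Q0 \<le> KL R Q0)"
    then have "KL Q Q0 \<le> KL Qs Q0" using Qs_in by blast
    then have "KL Q Qs \<le> 0" using py[of Q] a by linarith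
    moreover have "Q \<in> open_simplex" using iffD1[OF L[of Q]] a by blast
    ultimately show "Q = Qs" using KLz by blast
  qed
  have cr: "cross (P i) Qs - cross (P i) Q0 = KL (P i) Q0 - KL (P i) Qs" if "i \<in> {1..3}" for i
    using open_simplex_pos[OF pP[OF that]] p0 ps by (simp add: KL_cross)
  have cr1: "cross (P 1) Qs - cross (P 1) Q0 = d0 - KL (P 1) Qs" using cr[of 1] e01 d0_def by simp
  have cr2: "cross (P 2) Qs - cross (P 2) Q0 = d0 - c" using cr[of 2] d0_def c_def by simp
  have cr3: "cross (P 3) Qs - cross (P 3) Q0 = d0 - c" using cr[of 3] d0_def c_def e02 es by simp
  have a1: "cross Q0 Qs = l1 * cross (P 1) Qs + l2 * cross (P 2) Qs + l3 * cross (P 3) Qs"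
    unfolding Q0 by (rule cross_lin3)
  have a2: "cross Q0 Q0 = l1 * cross (P 1) Q0 + l2 * cross (P 2) Q0 + l3 * cross (P 3) Q0"
    by (subst (1) Q0) (rule cross_lin3)
  have b1: "cross Qs Qs = (1-t) * cross (P 2) Qs + t * cross (P 3) Qs"
    by (subst (1) Qs) (rule cross_lin2)
  have b2: "cross Qs Q0 = (1-t) * cross (P 2) Q0 + t * cross (P 3) Q0"
    unfolding Qs by (rule cross_lin2)
  have k1: "KL Qs Q0 = d0 - c"
  proof -
    have "KL Qs Q0 = (1-t) * (cross (P 2) Qs - cross (P 2) Q0) + t * (cross (P 3) Qs - cross (P 3) Q0)"
      using ps p0 b1 b2 by (simp add: KL_cross algebra_simps)
    then show ?thesis unfolding cr2 cr3 by (simp add: algebra_simps)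
  qed
  have k2: "KL Q0 Qs = - (d0 - c) + l1 * (KL (P 1) Qs - c)"
  proof -
    have "KL Q0 Qs = - (l1 * (cross (P 1) Qs - cross (P 1) Q0) + l2 * (cross (P 2) Qs - cross (P 2) Q0)
        + l3 * (cross (P 3) Qs - cross (P 3) Q0))"
      using ps p0 a1 a2 by (simp add: KL_cross algebra_simps)
    also have "\<dots> = - (l1 * (d0 - KL (P 1) Qs) + (l2 + l3) * (d0 - c))"
      unfolding cr1 cr2 cr3 by (simp add: algebra_simps)
    also have "\<dots> = - (d0 - c) + l1 * (KL (P 1) Qs - c)"
    proof -
      have l23: "l2 + l3 = 1 - l1" using lsum by simp
      show ?thesis unfolding l23 by (simp add: algebra_simps)
    qed
    finally show ?thesis .
  qed
  have "KL Qs Q0 \<ge> 0" "KL Q0 Qs \<ge> 0"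
    using gibbs_le[of Qs Q0] gibbs_le[of Q0 Qs] ps ss p0 by (simp_all add: KL_cross)
  then have "l1 * (KL (P 1) Qs - c) \<ge> 0" using k1 k2 by linarith
  then have D1: "KL (P 1) Qs \<le> c" using l1
    by (smt (verit) mult_neg_pos)
  have D: "lam 1 * KL (P 1) Qs + lam 2 * KL (P 2) Qs + lam 3 * KL (P 3) Qs \<le> c"
    if "lam \<in> closed_simplex 3" for lam
  proof -
    have l: "lam 1 \<ge> 0" "lam 2 \<ge> 0" "lam 3 \<ge> 0" "lam 1 + lam 2 + lam 3 = 1"
      using that unfolding closed_simplex_def sum13 by auto
    have "lam 1 * KL (P 1) Qs \<le> lam 1 * c" using D1 l by (simp add: mult_left_mono)
    moreover have "lam 2 * KL (P 2) Qs + lam 3 * KL (P 3) Qs = (lam 2 + lam 3) * c"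
      using es c_def by (simp add: algebra_simps)
    moreover have "lam 1 * c + (lam 2 + lam 3) * c = c" using l(4)
      by (metis distrib_right mult_1 add.assoc)
    ultimately show ?thesis by linarith
  qed
  have mi_le: "mutual_info 3 P lam \<le> c - KL (output_dist 3 P lam) Qs" if "lam \<in> closed_simplex 3" for lam
    using mi_formula[OF pP0 that ps] D[OF that] by linarith
  define ls where "ls = (\<lambda>i::nat. if i = 2 then 1 - t else if i = 3 then t else 0)"
  have ls_in: "ls \<in> closed_simplex 3" unfolding closed_simplex_def ls_def sum13 using t by auto
  have ls_out: "output_dist 3 P ls = Qs" unfolding output3 ls_def Qs by simp
  have ls_mi: "mutual_info 3 P ls = c"
  proof -
    have "KL Qs Qs = 0" using ps by (simp add: KL_cross)
    moreover have "ls 1 = 0" "ls 2 = 1 - t" "ls 3 = t" unfolding ls_def by simp_all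
    ultimately have "mutual_info 3 P ls = (1 - t) * c + t * c"
      using mi_formula[OF pP0 ls_in ps] ls_out es c_def by simp
    then show ?thesis by (simp add: algebra_simps)
  qed
  have mi_le2: "mutual_info 3 P lam \<le> c" if "lam \<in> closed_simplex 3" for lam
  proof -
    have "output_dist 3 P lam \<in> open_simplex" using mi_formula[OF pP0 that ps]
      unfolding open_simplex_def pos_def by blast
    then show ?thesis using mi_le[OF that] KLnn[of "output_dist 3 P lam"] by linarith
  qed
  have cap: "capacity 3 P = c"
    unfolding capacity_def
  proof (rule cSup_eq_maximum)
    show "c \<in> (\<lambda>lam. mutual_info 3 P lam) ` closed_simplex 3" using ls_in ls_mi by (metis image_eqI)
  next
    fix x assume "x \<in> (\<lambda>lam. mutual_info 3 P lam) ` closed_simplex 3"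
    then show "x \<le> c" using mi_le2 by blast
  qed
  have capo: "capacity_output 3 P = Qs"
    unfolding capacity_output_def
  proof (rule the_equality)
    show "\<exists>lam\<in>closed_simplex 3. mutual_info 3 P lam = capacity 3 P \<and> Qs = output_dist 3 P lam"
      using ls_in ls_mi ls_out cap by auto
  next
    fix Q assume "\<exists>lam\<in>closed_simplex 3. mutual_info 3 P lam = capacity 3 P \<and> Q = output_dist 3 P lam"
    then obtain lam where lam: "lam \<in> closed_simplex 3" "mutual_info 3 P lam = c" "Q = output_dist 3 P lam"
      using cap by auto
    have "KL Q Qs \<le> 0" using mi_le[OF lam(1)] lam by simp
    moreover have "Q \<in> open_simplex" using mi_formula[OF pP0 lam(1) ps] lam(3)
      unfolding open_simplex_def pos_def by auto
    ultimately show "Q = Qs" using KLz by blast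
  qed
  show ?thesis using iproj cap capo c_def by simp
qed


lemma KL_nonneg: "pos Q \<Longrightarrow> pos R \<Longrightarrow> sum Q UNIV = 1 \<Longrightarrow> sum R UNIV = 1 \<Longrightarrow> KL Q R \<ge> 0"
  using gibbs_le[of Q R] KL_cross[of Q R] by linarith

lemma KL_self: "pos Q \<Longrightarrow> KL Q Q = 0"
  by (simp add: KL_cross)

lemma cont_term:
  fixes g :: "real \<Rightarrow> real"
  assumes "\<And>t. t \<in> S \<Longrightarrow> g t > 0" "continuous_on S g" "a > 0"
  shows "continuous_on S (\<lambda>t. a * ln (a / g t))"
proof -
  have "continuous_on S (\<lambda>t. a / g t)"
    using assms by (intro continuous_on_divide continuous_on_const) (auto simp: less_imp_neq dest!: assms(1) intro: less_imp_neq[symmetric])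
  then have "continuous_on S (\<lambda>t. ln (a / g t))"
    using assms by (intro continuous_on_ln) (auto, metis assms(1) less_irrefl)
  then show ?thesis by (intro continuous_on_mult continuous_on_const)
qed

lemma exists_Qs:
  assumes pA: "pos A" "sum A UNIV = 1" and pB: "pos B" "sum B UNIV = 1"
  shows "\<exists>t. 0 \<le> t \<and> t \<le> 1 \<and> KL A (\<lambda>j. (1-t) * A j + t * B j) = KL B (\<lambda>j. (1-t) * A j + t * B j)"
proof -
  define f where "f t = KL A (\<lambda>j. (1-t) * A j + t * B j) - KL B (\<lambda>j. (1-t) * A j + t * B j)" for t
  have qpos: "(1-t) * A j + t * B j > 0" if "t \<in> {0..1}" for t j
  proof -
    have "A j > 0" "B j > 0" using pA pB unfolding pos_def by auto
    then have "(1-t) * A j \<ge> 0" "t * B j \<ge> 0" using that by auto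
    moreover have "(1-t) * A j > 0 \<or> t * B j > 0" using that \<open>A j > 0\<close> \<open>B j > 0\<close>
      by (cases "t = 1") auto
    ultimately show ?thesis by auto
  qed
  have cont: "continuous_on {0..1} f"
    unfolding f_def KL_def
  proof (intro continuous_on_diff continuous_on_sum ballI)
    fix j
    have a: "A j > 0" "B j > 0" using pA pB unfolding pos_def by auto
    have c: "continuous_on {0..1::real} (\<lambda>t. (1-t) * A j + t * B j)" by (intro continuous_intros)
    show "continuous_on {0..1} (\<lambda>t. A j * ln (A j / ((1 - t) * A j + t * B j)))"
      by (rule cont_term[OF _ c a(1)]) (use qpos in blast)
    show "continuous_on {0..1} (\<lambda>t. B j * ln (B j / ((1 - t) * A j + t * B j)))"
      by (rule cont_term[OF _ c a(2)]) (use qpos in blast)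
  qed
  have f0: "f 0 \<le> 0" unfolding f_def using KL_self[OF pA(1)] KL_nonneg[OF pB(1) pA(1) pB(2) pA(2)] by simp
  have f1: "f 1 \<ge> 0" unfolding f_def using KL_self[OF pB(1)] KL_nonneg[OF pA(1) pB(1) pA(2) pB(2)] by simp
  obtain t where "0 \<le> t" "t \<le> 1" "f t = 0" using IVT'[of f 0 0 1, OF f0 f1 _ cont] by auto
  then show ?thesis unfolding f_def by auto
qed


lemma interior_min:
  fixes q p :: "'b::finite \<Rightarrow> real"
  assumes q: "\<forall>j. q j \<ge> 0" and p: "\<forall>j. p j > 0"
    and mn: "\<And>e. 0 < e \<Longrightarrow> e \<le> 1 \<Longrightarrow>
      (\<Sum>j\<in>UNIV. q j * ln (q j)) \<le> (\<Sum>j\<in>UNIV. ((1-e)*q j + e*p j) * ln ((1-e)*q j + e*p j)) + e*K"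
  shows "\<forall>j. q j > 0"
proof (rule ccontr)
  assume "\<not> (\<forall>j. q j > 0)"
  then obtain j0 where j0: "q j0 = 0" using q by (metis less_eq_real_def)
  define p0 where "p0 = p j0"
  have p0: "p0 > 0" using p p0_def by auto
  define Kt where "Kt = (\<Sum>j\<in>UNIV. p j * ln (p j) - q j * ln (q j)) + K"
  define e where "e = min (1/2) (exp (- (\<bar>Kt\<bar> + 1) / p0))"
  have e: "0 < e" "e \<le> 1" unfolding e_def by auto
  have "ln e \<le> ln (exp (- (\<bar>Kt\<bar> + 1) / p0))" using e unfolding e_def by (subst ln_le_cancel_iff) auto
  then have "ln e \<le> - (\<bar>Kt\<bar> + 1) / p0" by simp
  then have lne: "p0 * ln e \<le> - (\<bar>Kt\<bar> + 1)" using p0 by (simp add: field_simps)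
  define qe where "qe j = (1-e)*q j + e*p j" for j
  define d where "d j = qe j * ln (qe j) - q j * ln (q j)" for j
  define b where "b j = e * (p j * ln (p j) - q j * ln (q j))" for j
  have db: "d j \<le> b j" for j
    using xlnx_convex[of "q j" "p j" e] q p e unfolding d_def b_def qe_def by (simp add: algebra_simps)
  have dj0: "d j0 = b j0 + e * p0 * ln e"
  proof -
    have "qe j0 = e * p0" unfolding qe_def p0_def using j0 by simp
    then have "d j0 = e * p0 * (ln e + ln p0)" unfolding d_def using j0 e p0 by (simp add: ln_mult)
    then show ?thesis unfolding b_def p0_def using j0 by (simp add: algebra_simps)
  qed
  have "sum d UNIV = d j0 + sum d (UNIV - {j0})" by (simp add: sum.remove)
  also have "\<dots> \<le> d j0 + sum b (UNIV - {j0})" using db by (simp add: sum_mono)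
  also have "\<dots> = sum b UNIV + e * p0 * ln e" unfolding dj0 by (simp add: sum.remove)
  finally have sd: "sum d UNIV \<le> sum b UNIV + e * p0 * ln e" .
  have sb: "sum b UNIV + e * K = e * Kt" unfolding b_def Kt_def by (simp add: sum_distrib_left algebra_simps)
  have "e * p0 * ln e \<le> e * (- (\<bar>Kt\<bar> + 1))" using lne e by (simp add: mult.assoc mult_left_mono)
  then have "sum d UNIV + e * K \<le> e * (Kt - \<bar>Kt\<bar> - 1)" using sd sb by (simp add: algebra_simps)
  also have "\<dots> < 0" using e by (intro mult_pos_neg) auto
  finally have "sum d UNIV + e * K < 0" .
  moreover have "sum d UNIV = (\<Sum>j\<in>UNIV. qe j * ln (qe j)) - (\<Sum>j\<in>UNIV. q j * ln (q j))"
    unfolding d_def by (simp add: sum_subtractf)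
  ultimately show False using mn[OF e] unfolding qe_def by linarith
qed


lemma local_pos:
  fixes q v :: "'b::finite \<Rightarrow> real"
  assumes q: "\<forall>j. q j > 0"
  shows "\<exists>d>0. \<forall>s. \<bar>s\<bar> < d \<longrightarrow> (\<forall>j. q j + s * v j > 0)"
proof -
  define d where "d = Min (range (\<lambda>j. q j / (\<bar>v j\<bar> + 1)))"
  have fin: "finite (range (\<lambda>j. q j / (\<bar>v j\<bar> + 1)))" by simp
  have d0: "d > 0" unfolding d_def using q
    by (subst Min_gr_iff[OF fin]) (auto intro: divide_pos_pos)
  have dle: "d \<le> q j / (\<bar>v j\<bar> + 1)" for j unfolding d_def by (rule Min_le[OF fin]) auto
  have "\<forall>s. \<bar>s\<bar> < d \<longrightarrow> (\<forall>j. q j + s * v j > 0)"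
  proof (intro allI impI)
    fix s j assume s: "\<bar>s\<bar> < d"
    have pv: "\<bar>v j\<bar> + 1 > 0" by simp
    have "\<bar>s\<bar> * (\<bar>v j\<bar> + 1) < d * (\<bar>v j\<bar> + 1)" using s pv by (simp add: mult_strict_right_mono)
    also have "\<dots> \<le> q j" using dle[of j] pv by (simp add: field_simps)
    finally have "\<bar>s\<bar> * (\<bar>v j\<bar> + 1) < q j" .
    moreover have "- (s * v j) \<le> \<bar>s\<bar> * (\<bar>v j\<bar> + 1)"
    proof -
      have "- (s * v j) \<le> \<bar>s * v j\<bar>" by simp
      also have "\<dots> = \<bar>s\<bar> * \<bar>v j\<bar>" by (simp add: abs_mult)
      also have "\<dots> \<le> \<bar>s\<bar> * (\<bar>v j\<bar> + 1)" by (simp add: mult_left_mono)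
      finally show ?thesis .
    qed
    ultimately show "q j + s * v j > 0" by linarith
  qed
  then show ?thesis using d0 by blast
qed

lemma deriv_xlnx: "(q::real) > 0 \<Longrightarrow> ((\<lambda>s. (q + s * v) * ln (q + s * v)) has_real_derivative (v * ln q + v)) (at 0)"
  apply (rule derivative_eq_intros)
  apply (rule derivative_eq_intros)+
  apply (auto intro!: derivative_eq_intros)
  done

lemma deriv_zero:
  fixes q v :: "'b::finite \<Rightarrow> real"
  assumes q: "\<forall>j. q j > 0"
    and mn: "\<And>s. (\<forall>j. q j + s * v j > 0) \<Longrightarrow>
       (\<Sum>j\<in>UNIV. q j * ln (q j)) \<le> (\<Sum>j\<in>UNIV. (q j + s * v j) * ln (q j + s * v j)) - a * s"
  shows "(\<Sum>j\<in>UNIV. v j * ln (q j)) + (\<Sum>j\<in>UNIV. v j) = a"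
proof -
  have dj: "((\<lambda>s. (q j + s * v j) * ln (q j + s * v j)) has_real_derivative (v j * ln (q j) + v j)) (at 0)" for j
    using deriv_xlnx q by blast
  have D1: "((\<lambda>s. \<Sum>j\<in>UNIV. (q j + s * v j) * ln (q j + s * v j)) has_real_derivative (\<Sum>j\<in>UNIV. v j * ln (q j) + v j)) (at 0)"
    by (rule DERIV_sum) (rule dj)
  have D2: "((\<lambda>s. a * s) has_real_derivative a) (at 0)" using DERIV_cmult_Id by blast
  have D: "((\<lambda>s. (\<Sum>j\<in>UNIV. (q j + s * v j) * ln (q j + s * v j)) - a * s) has_real_derivative
     ((\<Sum>j\<in>UNIV. v j * ln (q j) + v j) - a)) (at 0)"
    using DERIV_diff[OF D1 D2] .
  obtain d where d: "d > 0" "\<forall>s. \<bar>s\<bar> < d \<longrightarrow> (\<forall>j. q j + s * v j > 0)"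
    using local_pos[OF q] by blast
  have lm: "\<forall>y. \<bar>0 - y\<bar> < d \<longrightarrow> (\<lambda>s. (\<Sum>j\<in>UNIV. (q j + s * v j) * ln (q j + s * v j)) - a * s) 0
      \<le> (\<lambda>s. (\<Sum>j\<in>UNIV. (q j + s * v j) * ln (q j + s * v j)) - a * s) y"
  proof (intro allI impI)
    fix y assume "\<bar>0 - y\<bar> < d"
    then have "\<forall>j. q j + y * v j > 0" using d by simp
    then show "(\<lambda>s. (\<Sum>j\<in>UNIV. (q j + s * v j) * ln (q j + s * v j)) - a * s) 0
      \<le> (\<lambda>s. (\<Sum>j\<in>UNIV. (q j + s * v j) * ln (q j + s * v j)) - a * s) y"
      using mn by simp
  qed
  have "(\<Sum>j\<in>UNIV. v j * ln (q j) + v j) - a = 0" using DERIV_local_min[OF D d(1) lm] .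
  then show ?thesis by (simp add: sum.distrib)
qed



lemma minor_exists:
  fixes d2 d3 :: "'b::finite \<Rightarrow> real"
  assumes indep: "\<forall>c2 c3. (\<forall>j. c2 * d2 j + c3 * d3 j = 0) \<longrightarrow> c2 = 0 \<and> c3 = 0"
  shows "\<exists>j k. d2 j * d3 k - d2 k * d3 j \<noteq> 0"
proof (rule ccontr)
  assume "\<not> ?thesis"
  then have z: "\<forall>j k. d2 j * d3 k - d2 k * d3 j = 0" by simp
  show False
  proof (cases "\<forall>j. d2 j = 0")
    case True
    then have "\<forall>j. 1 * d2 j + 0 * d3 j = 0" by simp
    then show False using indep[rule_format, of 1 0] by simp
  next
    case False
    then obtain j0 where j0: "d2 j0 \<noteq> 0" by blast
    have "\<forall>k. d3 j0 * d2 k + (- d2 j0) * d3 k = 0"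
    proof
      fix k show "d3 j0 * d2 k + (- d2 j0) * d3 k = 0" using z[rule_format, of k j0] by (simp add: algebra_simps)
    qed
    then have "- d2 j0 = 0" using indep[rule_format, of "d3 j0" "- d2 j0"] by blast
    then show False using j0 by simp
  qed
qed

lemma le_one_of_dist:
  fixes Q :: "'b::finite \<Rightarrow> real"
  assumes "\<forall>j. Q j \<ge> 0" "sum Q UNIV = 1"
  shows "Q j \<le> 1"
proof -
  have "Q j \<le> sum Q UNIV" by (rule member_le_sum) (use assms in auto)
  then show ?thesis using assms by simp
qed


lemma equi_exists:
  fixes A B C :: "'b::finite \<Rightarrow> real"
  assumes pA: "pos A" "sum A UNIV = 1" and pB: "pos B" "sum B UNIV = 1" and pC: "pos C" "sum C UNIV = 1"
    and indep: "\<forall>c2 c3. (\<forall>j. c2 * (B j - A j) + c3 * (C j - A j) = 0) \<longrightarrow> c2 = 0 \<and> c3 = 0"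
  shows "\<exists>x y. pos (\<lambda>j. A j + x * (B j - A j) + y * (C j - A j)) \<and>
     KL A (\<lambda>j. A j + x * (B j - A j) + y * (C j - A j)) = KL B (\<lambda>j. A j + x * (B j - A j) + y * (C j - A j)) \<and>
     KL A (\<lambda>j. A j + x * (B j - A j) + y * (C j - A j)) = KL C (\<lambda>j. A j + x * (B j - A j) + y * (C j - A j))"
proof -
  define d2 where "d2 j = B j - A j" for j
  define d3 where "d3 j = C j - A j" for j
  define Qz where "Qz z j = A j + fst z * d2 j + snd z * d3 j" for z :: "real \<times> real" and j
  define Kset where "Kset = {z. \<forall>j. 0 \<le> Qz z j}"
  define a2 where "a2 = cross B B - cross A A"
  define a3 where "a3 = cross C C - cross A A"
  define Phi where "Phi z = (\<Sum>j\<in>UNIV. Qz z j * ln (Qz z j)) - a2 * fst z - a3 * snd z" for z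
  have sd2: "sum d2 UNIV = 0" unfolding d2_def using pA pB by (simp add: sum_subtractf)
  have sd3: "sum d3 UNIV = 0" unfolding d3_def using pA pC by (simp add: sum_subtractf)
  have sQ: "sum (Qz z) UNIV = 1" for z
    unfolding Qz_def using pA sd2 sd3 by (simp add: sum.distrib sum_distrib_left[symmetric])
  have Apos: "A j > 0" for j using pA unfolding pos_def by auto
  have indep': "\<forall>c2 c3. (\<forall>j. c2 * d2 j + c3 * d3 j = 0) \<longrightarrow> c2 = 0 \<and> c3 = 0"
    using indep unfolding d2_def d3_def .
  obtain j k where D: "d2 j * d3 k - d2 k * d3 j \<noteq> 0" using minor_exists[OF indep'] by blast
  define Dt where "Dt = d2 j * d3 k - d2 k * d3 j"
  have Dt: "\<bar>Dt\<bar> > 0" using D unfolding Dt_def by simp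
  define M where "M = (\<bar>d3 k\<bar> + \<bar>d3 j\<bar> + \<bar>d2 j\<bar> + \<bar>d2 k\<bar>) / \<bar>Dt\<bar>"
  have bound: "\<bar>fst z\<bar> \<le> M \<and> \<bar>snd z\<bar> \<le> M" if "z \<in> Kset" for z
  proof -
    define x where "x = fst z"
    define y where "y = snd z"
    have v: "\<bar>x * d2 i + y * d3 i\<bar> \<le> 1" for i
    proof -
      have nn: "\<forall>i. Qz z i \<ge> 0" using that unfolding Kset_def by auto
      have "Qz z i \<le> 1" using le_one_of_dist[OF nn sQ] .
      moreover have "A i \<le> 1" using le_one_of_dist[of A i] pA Apos less_imp_le by blast
      moreover have "Qz z i \<ge> 0" using nn by blast
      ultimately have "0 \<le> A i + x * d2 i + y * d3 i" "A i + x * d2 i + y * d3 i \<le> 1" "A i \<le> 1"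
        unfolding Qz_def x_def y_def by auto
      then show ?thesis using Apos[of i] unfolding abs_le_iff by linarith
    qed
    have ex: "x * Dt = (x * d2 j + y * d3 j) * d3 k - (x * d2 k + y * d3 k) * d3 j"
      unfolding Dt_def by (simp add: algebra_simps)
    have ey: "y * Dt = d2 j * (x * d2 k + y * d3 k) - d2 k * (x * d2 j + y * d3 j)"
      unfolding Dt_def by (simp add: algebra_simps)
    have "\<bar>x * Dt\<bar> \<le> \<bar>d3 k\<bar> + \<bar>d3 j\<bar>"
    proof -
      have "\<bar>(x * d2 j + y * d3 j) * d3 k\<bar> \<le> \<bar>d3 k\<bar>" using v[of j]
        by (simp add: abs_mult mult_left_le_one_le)
      moreover have "\<bar>(x * d2 k + y * d3 k) * d3 j\<bar> \<le> \<bar>d3 j\<bar>" using v[of k]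
        by (simp add: abs_mult mult_left_le_one_le)
      ultimately show ?thesis unfolding ex by linarith
    qed
    then have "\<bar>x\<bar> * \<bar>Dt\<bar> \<le> \<bar>d3 k\<bar> + \<bar>d3 j\<bar>" by (simp add: abs_mult)
    then have "\<bar>x\<bar> \<le> (\<bar>d3 k\<bar> + \<bar>d3 j\<bar>) / \<bar>Dt\<bar>" using Dt by (simp add: pos_le_divide_eq)
    moreover have "(\<bar>d3 k\<bar> + \<bar>d3 j\<bar>) / \<bar>Dt\<bar> \<le> M" unfolding M_def using Dt
      by (intro divide_right_mono) auto
    moreover have "\<bar>y * Dt\<bar> \<le> \<bar>d2 j\<bar> + \<bar>d2 k\<bar>"
    proof -
      have "\<bar>d2 j * (x * d2 k + y * d3 k)\<bar> \<le> \<bar>d2 j\<bar>" using v[of k]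
        by (simp add: abs_mult mult_right_le_one_le)
      moreover have "\<bar>d2 k * (x * d2 j + y * d3 j)\<bar> \<le> \<bar>d2 k\<bar>" using v[of j]
        by (simp add: abs_mult mult_right_le_one_le)
      ultimately show ?thesis unfolding ey by linarith
    qed
    then have "\<bar>y\<bar> * \<bar>Dt\<bar> \<le> \<bar>d2 j\<bar> + \<bar>d2 k\<bar>" by (simp add: abs_mult)
    then have "\<bar>y\<bar> \<le> (\<bar>d2 j\<bar> + \<bar>d2 k\<bar>) / \<bar>Dt\<bar>" using Dt by (simp add: pos_le_divide_eq)
    moreover have "(\<bar>d2 j\<bar> + \<bar>d2 k\<bar>) / \<bar>Dt\<bar> \<le> M" unfolding M_def using Dt
      by (intro divide_right_mono) auto
    ultimately show ?thesis unfolding x_def y_def by linarith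
  qed
  have sub: "Kset \<subseteq> {-M..M} \<times> {-M..M}"
  proof
    fix z assume "z \<in> Kset"
    then have "\<bar>fst z\<bar> \<le> M" "\<bar>snd z\<bar> \<le> M" using bound by auto
    then show "z \<in> {-M..M} \<times> {-M..M}" by (cases z) auto
  qed
  have clo: "closed Kset" unfolding Kset_def Qz_def
    by (intro closed_Collect_all closed_Collect_le continuous_intros)
  have comp: "compact Kset"
  proof -
    have "compact (({-M..M} \<times> {-M..M}) \<inter> Kset)"
      by (intro compact_Int_closed compact_Times compact_Icc clo)
    moreover have "({-M..M} \<times> {-M..M}) \<inter> Kset = Kset" using sub by blast
    ultimately show ?thesis by simp
  qed
  have ne: "Kset \<noteq> {}"
  proof -
    have "(0, 0) \<in> Kset" unfolding Kset_def Qz_def using Apos less_imp_le by auto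
    then show ?thesis by blast
  qed
  have cont: "continuous_on Kset Phi"
  proof -
    have c1: "continuous_on Kset (\<lambda>z. Qz z i * ln (Qz z i))" for i
    proof (rule continuous_on_compose2[OF cont_xlnx])
      show "continuous_on Kset (\<lambda>z. Qz z i)" unfolding Qz_def by (intro continuous_intros)
      show "(\<lambda>z. Qz z i) ` Kset \<subseteq> {0..}" unfolding Kset_def by auto
    qed
    show ?thesis unfolding Phi_def
      by (intro continuous_on_diff continuous_on_sum c1 continuous_intros)
  qed
  obtain z0 where z0: "z0 \<in> Kset" "\<And>z. z \<in> Kset \<Longrightarrow> Phi z0 \<le> Phi z"
    using continuous_attains_inf[OF comp ne cont] by blast
  define q where "q = Qz z0"
  have qnn: "\<forall>i. q i \<ge> 0" using z0(1) unfolding Kset_def q_def by auto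
  have qpos: "\<forall>i. q i > 0"
  proof (rule interior_min[OF qnn _, where p = A and K = "a2 * fst z0 + a3 * snd z0"])
    show "\<forall>i. A i > 0" using Apos by auto
  next
    fix e :: real assume e: "0 < e" "e \<le> 1"
    define ze where "ze = ((1-e) * fst z0, (1-e) * snd z0)"
    have Qe: "Qz ze i = (1-e) * q i + e * A i" for i
      unfolding Qz_def ze_def q_def by (simp add: algebra_simps)
    have "\<forall>i. 0 \<le> Qz ze i"
    proof
      fix i
      have "0 \<le> (1-e) * q i" using qnn e by simp
      moreover have "0 \<le> e * A i" using Apos[of i] e by simp
      ultimately show "0 \<le> Qz ze i" unfolding Qe by simp
    qed
    then have "ze \<in> Kset" unfolding Kset_def by simp
    then have "Phi z0 \<le> Phi ze" using z0(2) by blast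
    then show "(\<Sum>i\<in>UNIV. q i * ln (q i)) \<le> (\<Sum>i\<in>UNIV. ((1-e)*q i + e*A i) * ln ((1-e)*q i + e*A i))
       + e * (a2 * fst z0 + a3 * snd z0)"
    proof -
      have "Phi ze = (\<Sum>i\<in>UNIV. Qz ze i * ln (Qz ze i)) - a2 * fst ze - a3 * snd ze"
        by (simp add: Phi_def)
      also have "\<dots> = (\<Sum>i\<in>UNIV. ((1-e)*q i + e*A i) * ln ((1-e)*q i + e*A i))
          - (1-e) * (a2 * fst z0 + a3 * snd z0)"
      proof -
        have "a2 * fst ze + a3 * snd ze = (1-e) * (a2 * fst z0 + a3 * snd z0)"
          unfolding ze_def by (simp add: algebra_simps)
        moreover have "(\<Sum>i\<in>UNIV. Qz ze i * ln (Qz ze i)) = (\<Sum>i\<in>UNIV. ((1-e)*q i + e*A i) * ln ((1-e)*q i + e*A i))"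
          unfolding Qe ..
        ultimately show ?thesis by linarith
      qed
      finally have 1: "Phi ze = (\<Sum>i\<in>UNIV. ((1-e)*q i + e*A i) * ln ((1-e)*q i + e*A i))
          - (1-e) * (a2 * fst z0 + a3 * snd z0)" .
      have 2: "Phi z0 = (\<Sum>i\<in>UNIV. q i * ln (q i)) - (a2 * fst z0 + a3 * snd z0)"
        by (simp add: Phi_def q_def)
      have 3: "(1-e) * (a2 * fst z0 + a3 * snd z0) = (a2 * fst z0 + a3 * snd z0) - e * (a2 * fst z0 + a3 * snd z0)"
        by (simp add: algebra_simps)
      show ?thesis using \<open>Phi z0 \<le> Phi ze\<close> unfolding 1 2 3 by linarith
    qed
  qed
  have g2: "(\<Sum>i\<in>UNIV. d2 i * ln (q i)) + (\<Sum>i\<in>UNIV. d2 i) = a2"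
  proof (rule deriv_zero[OF qpos])
    fix s assume "\<forall>i. q i + s * d2 i > 0"
    then have "(fst z0 + s, snd z0) \<in> Kset" unfolding Kset_def Qz_def q_def
      by (auto simp: algebra_simps less_imp_le)
    then have "Phi z0 \<le> Phi (fst z0 + s, snd z0)" using z0(2) by blast
    moreover have "Qz (fst z0 + s, snd z0) i = q i + s * d2 i" for i
      unfolding Qz_def q_def by (simp add: algebra_simps)
    ultimately show "(\<Sum>i\<in>UNIV. q i * ln (q i)) \<le> (\<Sum>i\<in>UNIV. (q i + s * d2 i) * ln (q i + s * d2 i)) - a2 * s"
      unfolding Phi_def q_def by (simp add: algebra_simps)
  qed
  have g3: "(\<Sum>i\<in>UNIV. d3 i * ln (q i)) + (\<Sum>i\<in>UNIV. d3 i) = a3"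
  proof (rule deriv_zero[OF qpos])
    fix s assume "\<forall>i. q i + s * d3 i > 0"
    then have "(fst z0, snd z0 + s) \<in> Kset" unfolding Kset_def Qz_def q_def
      by (auto simp: algebra_simps less_imp_le)
    then have "Phi z0 \<le> Phi (fst z0, snd z0 + s)" using z0(2) by blast
    moreover have "Qz (fst z0, snd z0 + s) i = q i + s * d3 i" for i
      unfolding Qz_def q_def by (simp add: algebra_simps)
    ultimately show "(\<Sum>i\<in>UNIV. q i * ln (q i)) \<le> (\<Sum>i\<in>UNIV. (q i + s * d3 i) * ln (q i + s * d3 i)) - a3 * s"
      unfolding Phi_def q_def by (simp add: algebra_simps)
  qed
  have pq: "pos q" using qpos unfolding pos_def .
  have c2: "cross B q - cross A q = a2"
    using g2 sd2 unfolding cross_def d2_def by (simp add: sum_subtractf[symmetric] left_diff_distrib)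
  have c3: "cross C q - cross A q = a3"
    using g3 sd3 unfolding cross_def d3_def by (simp add: sum_subtractf[symmetric] left_diff_distrib)
  have kA: "KL A q = cross A A - cross A q" using KL_cross[OF pA(1) pq] .
  have kB: "KL B q = cross B B - cross B q" using KL_cross[OF pB(1) pq] .
  have kC: "KL C q = cross C C - cross C q" using KL_cross[OF pC(1) pq] .
  have e1: "KL A q = KL B q" using kA kB c2 unfolding a2_def by linarith
  have e2: "KL A q = KL C q" using kA kC c3 unfolding a3_def by linarith
  have qe: "(\<lambda>j. A j + fst z0 * (B j - A j) + snd z0 * (C j - A j)) = q"
    unfolding q_def Qz_def d2_def d3_def by simp
  show ?thesis
    by (rule exI[of _ "fst z0"], rule exI[of _ "snd z0"], unfold qe) (intro conjI pq e1 e2)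
qed


theorem theorem16:
  fixes P :: "nat \<Rightarrow> 'b::finite \<Rightarrow> real"
    and Q0 Q1 :: "'b \<Rightarrow> real" and lam0 :: "nat \<Rightarrow> real"
  assumes rows_dist: "\<forall>i\<in>{1..3::nat}. P i \<in> open_simplex"
    and gp: "general_position 3 P"
    and Q0_def: "Q0 = equidistant 3 P"
    and lam0_def: "lam0 = barycentric 3 P Q0"
    and l1: "lam0 1 < 0" and l2: "lam0 2 \<ge> 0" and l3: "lam0 3 \<ge> 0"
    and Q1_def: "Q1 = Iproj Q0 (affL [P 2, P 3])"
  shows "capacity_output 3 P = Q1 \<and> capacity 3 P = KL (P 2) Q1"
proof -
  have "P 1 \<in> open_simplex" by (rule bspec[OF rows_dist]) simp
  then have p1: "pos (P 1)" "sum (P 1) UNIV = 1" using open_simplex_pos by auto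
  have "P 2 \<in> open_simplex" by (rule bspec[OF rows_dist]) simp
  then have p2: "pos (P 2)" "sum (P 2) UNIV = 1" using open_simplex_pos by auto
  have "P 3 \<in> open_simplex" by (rule bspec[OF rows_dist]) simp
  then have p3: "pos (P 3)" "sum (P 3) UNIV = 1" using open_simplex_pos by auto
  have indep: "\<forall>c2 c3. (\<forall>j. c2 * (P 2 j - P 1 j) + c3 * (P 3 j - P 1 j) = 0) \<longrightarrow> c2 = 0 \<and> c3 = 0"
  proof (intro allI impI)
    fix c2 c3 assume h: "\<forall>j. c2 * (P 2 j - P 1 j) + c3 * (P 3 j - P 1 j) = 0"
    define c where "c i = (if i = 2 then c2 else c3)" for i :: nat
    have "\<forall>j. (\<Sum>i=2..3. c i * (P i j - P 1 j)) = 0" unfolding sum23 c_def using h by simp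
    then have "\<forall>i\<in>{2..3}. c i = 0" using gp unfolding general_position_def by blast
    then have "c 2 = 0" "c 3 = 0" by auto
    then show "c2 = 0 \<and> c3 = 0" unfolding c_def by simp
  qed
  obtain x y where xy: "pos (\<lambda>j. P 1 j + x * (P 2 j - P 1 j) + y * (P 3 j - P 1 j))"
     "KL (P 1) (\<lambda>j. P 1 j + x * (P 2 j - P 1 j) + y * (P 3 j - P 1 j)) = KL (P 2) (\<lambda>j. P 1 j + x * (P 2 j - P 1 j) + y * (P 3 j - P 1 j))"
     "KL (P 1) (\<lambda>j. P 1 j + x * (P 2 j - P 1 j) + y * (P 3 j - P 1 j)) = KL (P 3) (\<lambda>j. P 1 j + x * (P 2 j - P 1 j) + y * (P 3 j - P 1 j))"
    using equi_exists[OF p1 p2 p3 indep] by blast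
  define Qe where "Qe = (\<lambda>j. (1 - x - y) * P 1 j + x * P 2 j + y * P 3 j)"
  have Qe_eq: "(\<lambda>j. P 1 j + x * (P 2 j - P 1 j) + y * (P 3 j - P 1 j)) = Qe"
    unfolding Qe_def by (simp add: algebra_simps)
  have pQe: "pos Qe" using xy(1) unfolding Qe_eq .
  have eA: "KL (P 1) Qe = KL (P 2) Qe" using xy(2) unfolding Qe_eq .
  have eB: "KL (P 1) Qe = KL (P 3) Qe" using xy(3) unfolding Qe_eq .
  have sQe: "sum Qe UNIV = 1"
  proof -
    have "sum Qe UNIV = (1 - x - y) * sum (P 1) UNIV + x * sum (P 2) UNIV + y * sum (P 3) UNIV"
      unfolding Qe_def by (simp add: sum.distrib sum_distrib_left)
    then show ?thesis using p1 p2 p3 by simp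
  qed
  have Qe_os: "Qe \<in> open_simplex" using pQe sQe unfolding open_simplex_def pos_def by auto
  have aff3: "Q \<in> affL (rows 3 P) \<longleftrightarrow> Q \<in> open_simplex \<and> (\<exists>a b c. a + b + c = 1 \<and> Q = (\<lambda>j. a * P 1 j + b * P 2 j + c * P 3 j))" for Q
  proof
    assume "Q \<in> affL (rows 3 P)"
    then have "Q \<in> open_simplex \<and> (\<exists>mu. mu 0 + mu (Suc 0) + mu 2 = 1 \<and> (\<forall>j. Q j = mu 0 * P 1 j + mu (Suc 0) * P 2 j + mu 2 * P 3 j))"
      unfolding affL_def rows3 lessThan3 by (simp add: numeral_2_eq_2)
    then show "Q \<in> open_simplex \<and> (\<exists>a b c. a + b + c = 1 \<and> Q = (\<lambda>j. a * P 1 j + b * P 2 j + c * P 3 j))"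
      by (auto simp: fun_eq_iff)
  next
    assume "Q \<in> open_simplex \<and> (\<exists>a b c. a + b + c = 1 \<and> Q = (\<lambda>j. a * P 1 j + b * P 2 j + c * P 3 j))"
    then obtain a b c where h: "Q \<in> open_simplex" "a + b + c = 1" "Q = (\<lambda>j. a * P 1 j + b * P 2 j + c * P 3 j)" by blast
    show "Q \<in> affL (rows 3 P)" unfolding affL_def rows3 lessThan3
      using h by (auto intro!: exI[of _ "\<lambda>i. if i = 0 then a else if i = 1 then b else c"] simp: numeral_2_eq_2)
  qed
  have Qe_aff: "Qe \<in> affL (rows 3 P)" unfolding aff3 using Qe_os Qe_def
    by (intro conjI exI[of _ "1 - x - y"] exI[of _ x] exI[of _ y]) auto
  have Qe_equi: "\<forall>i\<in>{1..3}. \<forall>k\<in>{1..3}. KL (P i) Qe = KL (P k) Qe"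
  proof -
    have "{1..3::nat} = {1,2,3}" by auto
    then show ?thesis using eA eB by auto
  qed
  have Q0e: "Q0 = Qe"
    unfolding Q0_def equidistant_def
  proof (rule the_equality)
    show "Qe \<in> affL (rows 3 P) \<and> (\<forall>i\<in>{1..3}. \<forall>k\<in>{1..3}. KL (P i) Qe = KL (P k) Qe)"
      using Qe_aff Qe_equi by blast
  next
    fix Q assume h: "Q \<in> affL (rows 3 P) \<and> (\<forall>i\<in>{1..3}. \<forall>k\<in>{1..3}. KL (P i) Q = KL (P k) Q)"
    then obtain a b c where abc: "Q \<in> open_simplex" "a + b + c = 1" "Q = (\<lambda>j. a * P 1 j + b * P 2 j + c * P 3 j)"
      using aff3 by blast
    have pQ: "pos Q" "sum Q UNIV = 1" using abc(1) open_simplex_pos by auto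
    have hA: "KL (P 1) Q = KL (P 2) Q" "KL (P 1) Q = KL (P 3) Q" using h by auto
    define e where "e = KL (P 1) Qe"
    define e' where "e' = KL (P 1) Q"
    have dP: "cross (P i) Q - cross (P i) Qe = e - e'" if "i \<in> {1,2,3}" for i
    proof -
      have "KL (P i) Q = e'" "KL (P i) Qe = e" using that hA eA eB unfolding e_def e'_def by auto
      moreover have "pos (P i)" using that p1 p2 p3 by auto
      ultimately show ?thesis using pQ pQe by (simp add: KL_cross)
    qed
    have d1: "cross (P 1) Q - cross (P 1) Qe = e - e'" by (rule dP) simp
    have d2: "cross (P 2) Q - cross (P 2) Qe = e - e'" by (rule dP) simp
    have d3: "cross (P 3) Q - cross (P 3) Qe = e - e'" by (rule dP) simp
    have L1: "cross Q Q - cross Q Qe = e - e'"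
    proof -
      have "cross Q Q = a * cross (P 1) Q + b * cross (P 2) Q + c * cross (P 3) Q"
        by (subst (1) abc(3)) (rule cross_lin3)
      moreover have "cross Q Qe = a * cross (P 1) Qe + b * cross (P 2) Qe + c * cross (P 3) Qe"
        by (subst abc(3)) (rule cross_lin3)
      ultimately have "cross Q Q - cross Q Qe = a * (cross (P 1) Q - cross (P 1) Qe)
          + b * (cross (P 2) Q - cross (P 2) Qe) + c * (cross (P 3) Q - cross (P 3) Qe)"
        by (simp add: algebra_simps)
      also have "\<dots> = (a + b + c) * (e - e')" by (simp only: d1 d2 d3) (simp add: algebra_simps)
      finally show ?thesis using abc(2) by simp
    qed
    have L2: "cross Qe Q - cross Qe Qe = e - e'"
    proof -
      have "cross Qe Q = (1-x-y) * cross (P 1) Q + x * cross (P 2) Q + y * cross (P 3) Q"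
        unfolding Qe_def by (rule cross_lin3)
      moreover have "cross Qe Qe = (1-x-y) * cross (P 1) Qe + x * cross (P 2) Qe + y * cross (P 3) Qe"
        by (subst (1) Qe_def) (rule cross_lin3)
      ultimately have "cross Qe Q - cross Qe Qe = (1-x-y) * (cross (P 1) Q - cross (P 1) Qe)
          + x * (cross (P 2) Q - cross (P 2) Qe) + y * (cross (P 3) Q - cross (P 3) Qe)"
        by (simp add: algebra_simps)
      also have "\<dots> = ((1-x-y) + x + y) * (e - e')" by (simp only: d1 d2 d3) (simp add: algebra_simps)
      finally show ?thesis by simp
    qed
    have g1: "cross Q Qe \<le> cross Q Q" using gibbs_le[OF pQ(1) pQe pQ(2) sQe] .
    have g2: "cross Qe Q \<le> cross Qe Qe" using gibbs_le[OF pQe pQ(1) sQe pQ(2)] .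
    have "cross Q Qe \<ge> cross Q Q" using L1 L2 g2 by linarith
    then show "Q = Qe" using gibbs_eq[OF pQ(1) pQe pQ(2) sQe] by blast
  qed
  define lb where "lb i = (if i = 1 then 1 - x - y else if i = 2 then x else if i = 3 then y else 0)" for i :: nat
  have lam0e: "lam0 = lb"
    unfolding lam0_def barycentric_def
  proof (rule the_equality)
    show "(\<Sum>i=1..3. lb i) = 1 \<and> (\<forall>i. i \<notin> {1..3} \<longrightarrow> lb i = 0) \<and> (\<forall>j. Q0 j = (\<Sum>i=1..3. lb i * P i j))"
      unfolding sum13 Q0e Qe_def lb_def by auto
  next
    fix lam assume h: "(\<Sum>i=1..3. lam i) = 1 \<and> (\<forall>i. i \<notin> {1..3} \<longrightarrow> lam i = 0) \<and> (\<forall>j. Q0 j = (\<Sum>i=1..3. lam i * P i j))"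
    have s: "lam 1 + lam 2 + lam 3 = 1" using h unfolding sum13 by simp
    have q: "Qe j = lam 1 * P 1 j + lam 2 * P 2 j + lam 3 * P 3 j" for j using h unfolding sum13 Q0e by simp
    have "\<forall>j. (lam 2 - x) * (P 2 j - P 1 j) + (lam 3 - y) * (P 3 j - P 1 j) = 0"
    proof
      fix j
      have l1e: "lam 1 = 1 - lam 2 - lam 3" using s by simp
      have "(lam 2 - x) * (P 2 j - P 1 j) + (lam 3 - y) * (P 3 j - P 1 j)
          = (lam 1 * P 1 j + lam 2 * P 2 j + lam 3 * P 3 j) - Qe j"
        unfolding l1e Qe_def by (simp add: algebra_simps)
      then show "(lam 2 - x) * (P 2 j - P 1 j) + (lam 3 - y) * (P 3 j - P 1 j) = 0" using q[of j] by simp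
    qed
    then have "lam 2 - x = 0 \<and> lam 3 - y = 0" using indep by blast
    then have "lam 2 = x" "lam 3 = y" "lam 1 = 1 - x - y" using s by auto
    moreover have "lam i = 0" if "i \<notin> {1,2,3}" for i
    proof -
      have "i \<notin> {1..3}" using that by auto
      then show ?thesis using h by blast
    qed
    ultimately show "lam = lb" unfolding lb_def by (auto simp: fun_eq_iff)
  qed
  have l1': "1 - x - y < 0" using l1 unfolding lam0e lb_def by simp
  obtain t where t: "0 \<le> t" "t \<le> 1"
     "KL (P 2) (\<lambda>j. (1-t) * P 2 j + t * P 3 j) = KL (P 3) (\<lambda>j. (1-t) * P 2 j + t * P 3 j)"
    using exists_Qs[OF p2 p3] by blast
  have Q0s: "Q0 \<in> open_simplex" using Qe_os Q0e by simp
  have FP: "Iproj Q0 (affL [P 2, P 3]) = (\<lambda>j. (1-t) * P 2 j + t * P 3 j) \<and>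
     capacity_output 3 P = (\<lambda>j. (1-t) * P 2 j + t * P 3 j) \<and>
     capacity 3 P = KL (P 2) (\<lambda>j. (1-t) * P 2 j + t * P 3 j)"
  proof (rule final_part[OF rows_dist Q0s _ _ l1' _ _ t(1) t(2) refl t(3)])
    show "Q0 = (\<lambda>j. (1 - x - y) * P 1 j + x * P 2 j + y * P 3 j)" using Q0e Qe_def by simp
    show "1 - x - y + x + y = 1" by simp
    show "KL (P 1) Q0 = KL (P 2) Q0" using eA Q0e by simp
    show "KL (P 2) Q0 = KL (P 3) Q0" using eA eB Q0e by simp
  qed
  then show ?thesis using Q1_def by simp
qed


end
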